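(* Let $n\ge 2$ and let $\mathbf{c}=(c_1,\dots,c_n)\in\mathbb{R}^n_+$ be a nonnegative vector with $c_1=0$ such that the generalized Pascal matrix with generating vector $\mathbf{c}$ (the case $m=2$) is positive definite. Then for every $m\ge 2$, the $m$th order $n$-dimensional generalized Pascal tensor with generating vector $\mathbf{c}$ is strongly completely positive, and if $m$ is even it is positive definite.
   Context: For a nonnegative $\mathbf{c}\in\mathbb{R}^n$ and $m\ge 2$, the $m$th order $n$-dimensional generalized Pascal tensor with generating vector $\mathbf{c}$ is $\mathcal{A}=(a_{i_1\dots i_m})$ with $a_{i_1\dots i_m}=\frac{\Gamma(c_{i_1}+\dots+c_{i_m}+1)}{\Gamma(c_{i_1}+1)\cdots\Gamma(c_{i_m}+1)}$; for $m=2$ it is called the generalized Pascal matrix. A symmetric tensor of order $m$, dimension $n$ is strongly completely positive if it equals $\sum_{k=1}^r(\mathbf{u}^{(k)})^m$ for nonnegative vectors $\mathbf{u}^{(k)}\in\mathbb{R}^n$ spanning $\mathbb{R}^n$, where $\mathbf{u}^m$ has entries $u_{i_1}\cdots u_{i_m}$. For even $m$, it is positive definite if $\sum a_{i_1\dots i_m}x_{i_1}\cdots x_{i_m}>0$ for all nonzero $\mathbf{x}\in\mathbb{R}^n$. *)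

theory Defs
  imports "HOL-Analysis.Analysis"
begin

(* Vectors in R^n are functions nat => real, only indices 0..n-1 matter
   (paper's index i corresponds to i-1 here).
   An m-th order n-dimensional tensor is a function on index lists
   (i_1,...,i_m), i.e. lists of length m with entries < n. *)

definition tensor_indices :: "nat \<Rightarrow> nat \<Rightarrow> nat list set" where
  "tensor_indices n m = {is. length is = m \<and> set is \<subseteq> {..<n}}"

definition gen_pascal_tensor :: "(nat \<Rightarrow> real) \<Rightarrow> nat list \<Rightarrow> real" where
  "gen_pascal_tensor c is =
     Gamma (sum_list (map c is) + 1) / prod_list (map (\<lambda>i. Gamma (c i + 1)) is)"

definition symmetric_tensor :: "nat \<Rightarrow> nat \<Rightarrow> (nat list \<Rightarrow> real) \<Rightarrow> bool" where
  "symmetric_tensor n m A \<longleftrightarrow>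
     (\<forall>is \<in> tensor_indices n m. \<forall>js \<in> tensor_indices n m.
        mset is = mset js \<longrightarrow> A is = A js)"

definition tensor_power :: "(nat \<Rightarrow> real) \<Rightarrow> nat list \<Rightarrow> real" where
  "tensor_power u is = prod_list (map u is)"

definition strongly_completely_positive :: "nat \<Rightarrow> nat \<Rightarrow> (nat list \<Rightarrow> real) \<Rightarrow> bool" where
  "strongly_completely_positive n m A \<longleftrightarrow>
     symmetric_tensor n m A \<and>
     (\<exists>(r::nat) (u :: nat \<Rightarrow> nat \<Rightarrow> real).
        (\<forall>k<r. \<forall>i<n. u k i \<ge> 0) \<and>
        \<comment> \<open>the vectors u k (k < r), restricted to indices < n, span R^n\<close>
        (\<forall>x :: nat \<Rightarrow> real. \<exists>a :: nat \<Rightarrow> real. \<forall>i<n. x i = (\<Sum>k<r. a k * u k i)) \<and>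
        (\<forall>is \<in> tensor_indices n m. A is = (\<Sum>k<r. tensor_power (u k) is)))"

definition tensor_form :: "nat \<Rightarrow> nat \<Rightarrow> (nat list \<Rightarrow> real) \<Rightarrow> (nat \<Rightarrow> real) \<Rightarrow> real" where
  "tensor_form n m A x = (\<Sum>is \<in> tensor_indices n m. A is * prod_list (map x is))"

definition positive_definite_tensor :: "nat \<Rightarrow> nat \<Rightarrow> (nat list \<Rightarrow> real) \<Rightarrow> bool" where
  "positive_definite_tensor n m A \<longleftrightarrow>
     (\<forall>x :: nat \<Rightarrow> real. (\<exists>i<n. x i \<noteq> 0) \<longrightarrow> tensor_form n m A x > 0)"

end

theory Submission
  imports Defs
begin

lemma lin_dep:
  fixes g :: "'j \<Rightarrow> 'd \<Rightarrow> real"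
  assumes "finite D" "finite J" "card J > card D"
  shows "\<exists>\<alpha>. (\<exists>j\<in>J. \<alpha> j \<noteq> 0) \<and> (\<forall>d\<in>D. (\<Sum>j\<in>J. \<alpha> j * g j d) = 0)"
  using assms
proof (induction D arbitrary: J g rule: finite_induct)
  case empty
  then obtain j where "j \<in> J" by fastforce
  then show ?case by (intro exI[of _ "\<lambda>_. 1"]) auto
next
  case (insert d0 D)
  show ?case
  proof (cases "\<forall>j\<in>J. g j d0 = 0")
    case True
    have "card J > card D" using insert by simp
    from insert.IH[OF insert.prems(1) this, of g] obtain \<alpha> where
      "\<exists>j\<in>J. \<alpha> j \<noteq> 0" "\<forall>d\<in>D. (\<Sum>j\<in>J. \<alpha> j * g j d) = 0" by blast
    then show ?thesis using True by (intro exI[of _ \<alpha>]) auto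
  next
    case False
    then obtain j0 where j0: "j0 \<in> J" "g j0 d0 \<noteq> 0" by blast
    define g' where "g' j d = g j d - (g j d0 / g j0 d0) * g j0 d" for j d
    have fin: "finite (J - {j0})" using insert by simp
    have cJ: "card (J - {j0}) > card D" using insert j0 by simp
    from insert.IH[OF fin cJ, of g'] obtain \<beta> where
      \<beta>: "\<exists>j\<in>J - {j0}. \<beta> j \<noteq> 0" "\<forall>d\<in>D. (\<Sum>j\<in>J - {j0}. \<beta> j * g' j d) = 0" by blast
    define \<alpha> where "\<alpha> j = (if j = j0 then - (\<Sum>j\<in>J - {j0}. \<beta> j * g j d0) / g j0 d0 else \<beta> j)" for j
    have split: "(\<Sum>j\<in>J. \<alpha> j * g j d) = \<alpha> j0 * g j0 d + (\<Sum>j\<in>J - {j0}. \<beta> j * g j d)" for d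
      using insert.prems(1) j0(1) by (simp add: sum.remove \<alpha>_def)
    have "\<forall>d\<in>insert d0 D. (\<Sum>j\<in>J. \<alpha> j * g j d) = 0"
    proof
      fix d assume d: "d \<in> insert d0 D"
      show "(\<Sum>j\<in>J. \<alpha> j * g j d) = 0"
      proof (cases "d = d0")
        case True
        then show ?thesis unfolding split using j0 by (simp add: \<alpha>_def)
      next
        case False
        with d have dD: "d \<in> D" by auto
        have "(\<Sum>j\<in>J - {j0}. \<beta> j * g' j d) = (\<Sum>j\<in>J - {j0}. \<beta> j * g j d)
              - (\<Sum>j\<in>J - {j0}. \<beta> j * g j d0) / g j0 d0 * g j0 d"
          by (simp add: g'_def algebra_simps sum_subtractf sum_distrib_right sum_distrib_left sum_divide_distrib)
        then show ?thesis unfolding split using \<beta>(2) dD by (simp add: \<alpha>_def)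
      qed
    qed
    moreover have "\<exists>j\<in>J. \<alpha> j \<noteq> 0" using \<beta>(1) by (auto simp: \<alpha>_def)
    ultimately show ?thesis by blast
  qed
qed

lemma carath:
  fixes g :: "'j \<Rightarrow> 'd \<Rightarrow> real" and w :: "'j \<Rightarrow> real"
  assumes "finite D" "finite J" "\<forall>j\<in>J. w j \<ge> 0"
  shows "\<exists>J' w'. J' \<subseteq> J \<and> card J' \<le> card D \<and> (\<forall>j\<in>J'. w' j \<ge> 0) \<and>
     (\<forall>d\<in>D. (\<Sum>j\<in>J'. w' j * g j d) = (\<Sum>j\<in>J. w j * g j d)) \<and> (\<Sum>j\<in>J'. w' j) \<le> (\<Sum>j\<in>J. w j)"
  using assms(2,3)
proof (induction "card J" arbitrary: J w rule: less_induct)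
  case less
  show ?case
  proof (cases "card J \<le> card D")
    case True
    then show ?thesis using less.prems by (intro exI[of _ J] exI[of _ w]) auto
  next
    case False
    then have "card J > card D" by simp
    from lin_dep[OF assms(1) less.prems(1) this, of g] obtain \<alpha>0 where
      a0: "\<exists>j\<in>J. \<alpha>0 j \<noteq> 0" "\<forall>d\<in>D. (\<Sum>j\<in>J. \<alpha>0 j * g j d) = 0" by blast
    define \<alpha> where "\<alpha> = (if (\<Sum>j\<in>J. \<alpha>0 j) \<ge> 0 then \<alpha>0 else (\<lambda>j. - \<alpha>0 j))"
    have a1: "\<exists>j\<in>J. \<alpha> j \<noteq> 0" using a0(1) by (auto simp: \<alpha>_def)
    have a2: "\<forall>d\<in>D. (\<Sum>j\<in>J. \<alpha> j * g j d) = 0" using a0(2) by (auto simp: \<alpha>_def sum_negf)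
    have a3: "(\<Sum>j\<in>J. \<alpha> j) \<ge> 0" by (auto simp: \<alpha>_def sum_negf)
    have "\<exists>j\<in>J. \<alpha> j > 0"
    proof (rule ccontr)
      assume "\<not> ?thesis"
      then have le: "\<forall>j\<in>J. \<alpha> j \<le> 0" by auto
      have "(\<Sum>j\<in>J. \<alpha> j) \<le> 0" using le by (simp add: sum_nonpos)
      then have "(\<Sum>j\<in>J. - \<alpha> j) = 0" using a3 by (simp add: sum_negf)
      then have "\<forall>j\<in>J. - \<alpha> j = 0"
        using sum_nonneg_eq_0_iff[OF less.prems(1), of "\<lambda>j. - \<alpha> j"] le by auto
      then have "\<forall>j\<in>J. \<alpha> j = 0" by auto
      with a1 show False by auto
    qed
    define T where "T = {j\<in>J. \<alpha> j > 0}"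
    have Tfin: "finite T" "T \<noteq> {}" using less.prems(1) \<open>\<exists>j\<in>J. \<alpha> j > 0\<close> by (auto simp: T_def)
    define t where "t = Min ((\<lambda>j. w j / \<alpha> j) ` T)"
    have "t \<in> (\<lambda>j. w j / \<alpha> j) ` T" unfolding t_def using Tfin by (intro Min_in) auto
    then obtain j0 where j0: "j0 \<in> T" "t = w j0 / \<alpha> j0" by auto
    have t0: "t \<ge> 0" using j0 less.prems(2) by (auto simp: T_def)
    define w2 where "w2 j = w j - t * \<alpha> j" for j
    have w2pos: "\<forall>j\<in>J. w2 j \<ge> 0"
    proof
      fix j assume j: "j \<in> J"
      show "w2 j \<ge> 0"
      proof (cases "\<alpha> j > 0")
        case True
        then have "t \<le> w j / \<alpha> j" unfolding t_def using Tfin j by (auto simp: T_def intro!: Min_le)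
        then show ?thesis using True by (simp add: w2_def field_simps)
      next
        case False
        then have "t * \<alpha> j \<le> 0" using t0 by (simp add: mult_nonneg_nonpos)
        moreover have "w j \<ge> 0" using less.prems(2) j by blast
        ultimately show ?thesis by (simp add: w2_def)
      qed
    qed
    have w2j0: "w2 j0 = 0" using j0 by (auto simp: w2_def T_def)
    have j0J: "j0 \<in> J" using j0 by (auto simp: T_def)
    have eqs: "(\<Sum>j\<in>J - {j0}. w2 j * g j d) = (\<Sum>j\<in>J. w j * g j d)" if "d \<in> D" for d
    proof -
      have "(\<Sum>j\<in>J - {j0}. w2 j * g j d) = (\<Sum>j\<in>J. w2 j * g j d)"
        using sum.remove[OF less.prems(1) j0J, of "\<lambda>j. w2 j * g j d"] w2j0 by simp
      also have "\<dots> = (\<Sum>j\<in>J. w j * g j d) - t * (\<Sum>j\<in>J. \<alpha> j * g j d)"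
        by (simp add: w2_def algebra_simps sum_subtractf sum_distrib_left)
      finally show ?thesis using a2 that by simp
    qed
    have sumw: "(\<Sum>j\<in>J - {j0}. w2 j) \<le> (\<Sum>j\<in>J. w j)"
    proof -
      have "(\<Sum>j\<in>J - {j0}. w2 j) = (\<Sum>j\<in>J. w2 j)"
        using sum.remove[OF less.prems(1) j0J, of w2] w2j0 by simp
      also have "\<dots> = (\<Sum>j\<in>J. w j) - t * (\<Sum>j\<in>J. \<alpha> j)"
        by (simp add: w2_def sum_subtractf sum_distrib_left)
      finally show ?thesis using t0 a3 by (smt (verit) mult_nonneg_nonneg)
    qed
    have lt: "card (J - {j0}) < card J" using j0J less.prems(1) by (meson card_Diff1_less)
    from less.hyps[OF lt _ , of w2] less.prems(1) w2pos obtain J' w' where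
      "J' \<subseteq> J - {j0}" "card J' \<le> card D" "\<forall>j\<in>J'. w' j \<ge> 0"
      "\<forall>d\<in>D. (\<Sum>j\<in>J'. w' j * g j d) = (\<Sum>j\<in>J - {j0}. w2 j * g j d)"
      "(\<Sum>j\<in>J'. w' j) \<le> (\<Sum>j\<in>J - {j0}. w2 j)" by auto
    then show ?thesis using eqs sumw by (intro exI[of _ J'] exI[of _ w']) auto
  qed
qed

lemma subseq_conv:
  fixes X :: "nat \<Rightarrow> nat \<Rightarrow> real"
  assumes "\<forall>N. \<forall>k<K. \<bar>X N k\<bar> \<le> M"
  shows "\<exists>r L. strict_mono r \<and> (\<forall>k<K. (\<lambda>N. X (r N) k) \<longlonglongrightarrow> L k)"
  using assms
proof (induction K)
  case 0
  then show ?case by (intro exI[of _ id]) (auto simp: strict_mono_def)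
next
  case (Suc K)
  then obtain r L where r: "strict_mono r" "\<forall>k<K. (\<lambda>N. X (r N) k) \<longlonglongrightarrow> L k" by auto
  have "bounded (range (\<lambda>N. X (r N) K))"
    using Suc.prems by (intro boundedI[of _ M]) auto
  from bounded_imp_convergent_subsequence[OF this] obtain l r2 where
    r2: "strict_mono r2" "((\<lambda>N. X (r N) K) \<circ> r2) \<longlonglongrightarrow> l" by blast
  define L' where "L' k = (if k < K then L k else l)" for k
  have "\<forall>k<Suc K. (\<lambda>N. X ((r \<circ> r2) N) k) \<longlonglongrightarrow> L' k"
  proof (intro allI impI)
    fix k assume k: "k < Suc K"
    show "(\<lambda>N. X ((r \<circ> r2) N) k) \<longlonglongrightarrow> L' k"
    proof (cases "k < K")
      case True
      from LIMSEQ_subseq_LIMSEQ[OF r(2)[rule_format, OF True] r2(1)]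
      show ?thesis using True by (simp add: L'_def o_def)
    next
      case False
      then have "k = K" using k by simp
      then show ?thesis using r2(2) by (simp add: L'_def o_def)
    qed
  qed
  moreover have "strict_mono (r \<circ> r2)" using r(1) r2(1) by (rule strict_mono_o)
  ultimately show ?case by blast
qed

lemma not_cbox_atLeast: "\<not> (\<exists>a b. {0::real..} = cbox a b)"
proof
  assume "\<exists>a b. {0::real..} = cbox a b"
  then obtain a b where ab: "{0::real..} = {a..b}" by auto
  have "max 0 b + 1 \<in> {0::real..}" by simp
  then show False unfolding ab by (simp add: max_def split: if_splits)
qed

lemma abs_tri_half: "\<bar>a - z\<bar> < e/2 \<Longrightarrow> \<bar>z - v\<bar> < e/2 \<Longrightarrow> \<bar>a - v\<bar> < (e::real)" by arith

lemma abs_tri_half2: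
  fixes f :: "real \<Rightarrow> real"
  assumes "norm ((\<Sum>(x, k)\<in>p. Henstock_Kurzweil_Integration.content k *\<^sub>R f x) - z) < e/2" "\<bar>z - v\<bar> < e/2"
  shows "\<bar>(\<Sum>(x,K)\<in>p. Henstock_Kurzweil_Integration.content K * f x) - v\<bar> < e"
  using assms unfolding real_norm_def real_scaleR_def by (rule abs_tri_half)

lemma approx_riemann:
  fixes \<Phi> :: "'d \<Rightarrow> real \<Rightarrow> real"
  assumes "finite D" "\<forall>d\<in>D. (\<Phi> d has_integral v d) {0..}" "e > 0"
  shows "\<exists>p a b. p tagged_division_of {a..b} \<and>
     (\<forall>d\<in>D. \<bar>(\<Sum>(x,K)\<in>p. Henstock_Kurzweil_Integration.content K * (if x \<in> {0..} then \<Phi> d x else 0)) - v d\<bar> < e)"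
proof -
  have Bex: "\<forall>d\<in>D. \<exists>B>0. \<forall>a b. ball 0 B \<subseteq> cbox a b \<longrightarrow>
      (\<exists>z. ((\<lambda>x. if x \<in> {0..} then \<Phi> d x else 0) has_integral z) (cbox a b) \<and> norm (z - v d) < e/2)"
  proof
    fix d assume "d \<in> D"
    then have hi: "(\<Phi> d has_integral v d) {0..}" using assms by auto
    show "\<exists>B>0. \<forall>a b. ball 0 B \<subseteq> cbox a b \<longrightarrow>
      (\<exists>z. ((\<lambda>x. if x \<in> {0..} then \<Phi> d x else 0) has_integral z) (cbox a b) \<and> norm (z - v d) < e/2)"
      by (rule has_integral_altD[OF hi not_cbox_atLeast half_gt_zero[OF assms(3)]]) (intro exI conjI, assumption+)
  qed
  from bchoice[OF Bex] obtain B where B: "\<forall>d\<in>D. B d > 0 \<and> (\<forall>a b. ball 0 (B d) \<subseteq> cbox a b \<longrightarrow>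
      (\<exists>z. ((\<lambda>x. if x \<in> {0..} then \<Phi> d x else 0) has_integral z) (cbox a b) \<and> norm (z - v d) < e/2))"
    ..
  define M where "M = (\<Sum>d\<in>D. B d) + 1"
  have "\<forall>d\<in>D. ball 0 (B d) \<subseteq> cbox (-M) M"
  proof
    fix d assume d: "d \<in> D"
    have "B d \<le> (\<Sum>d\<in>D. B d)" using B d assms(1) by (intro member_le_sum) auto
    then show "ball 0 (B d) \<subseteq> cbox (-M) M" unfolding M_def by (auto simp: dist_real_def)
  qed
  then have Zex: "\<forall>d\<in>D. \<exists>z. ((\<lambda>x. if x \<in> {0..} then \<Phi> d x else 0) has_integral z) (cbox (-M) M) \<and> norm (z - v d) < e/2"
    using B by blast
  from bchoice[OF Zex] obtain z where z: "\<forall>d\<in>D. ((\<lambda>x. if x \<in> {0..} then \<Phi> d x else 0) has_integral z d) (cbox (-M) M) \<and> norm (z d - v d) < e/2"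
    ..
  have Gex: "\<forall>d\<in>D. \<exists>\<gamma>. gauge \<gamma> \<and> (\<forall>p. p tagged_division_of (cbox (-M) M) \<and> \<gamma> fine p \<longrightarrow>
        norm ((\<Sum>(x, k)\<in>p. Henstock_Kurzweil_Integration.content k *\<^sub>R (if x \<in> {0..} then \<Phi> d x else 0)) - z d) < e/2)"
  proof
    fix d assume d: "d \<in> D"
    have "((\<lambda>x. if x \<in> {0..} then \<Phi> d x else 0) has_integral z d) (cbox (-M) M)" (is ?hz) using z d by blast
    show "\<exists>\<gamma>. gauge \<gamma> \<and> (\<forall>p. p tagged_division_of (cbox (-M) M) \<and> \<gamma> fine p \<longrightarrow>
        norm ((\<Sum>(x, k)\<in>p. Henstock_Kurzweil_Integration.content k *\<^sub>R (if x \<in> {0..} then \<Phi> d x else 0)) - z d) < e/2)"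
    proof -
      obtain \<gamma> where g1: "gauge \<gamma>" and g2: "\<And>D. D tagged_division_of (cbox (-M) M) \<Longrightarrow> \<gamma> fine D \<Longrightarrow>
        norm ((\<Sum>(x, k)\<in>D. Henstock_Kurzweil_Integration.content k *\<^sub>R (if x \<in> {0..} then \<Phi> d x else 0)) - z d) < e/2"
        by (rule has_integralD[OF \<open>?hz\<close> half_gt_zero[OF assms(3)]]) (rule that)
      show ?thesis by (intro exI[of _ \<gamma>] conjI allI impI g1, elim conjE, rule g2, assumption+)
    qed
  qed
  from bchoice[OF Gex] obtain \<gamma> where \<gamma>: "\<forall>d\<in>D. gauge (\<gamma> d) \<and> (\<forall>p. p tagged_division_of (cbox (-M) M) \<and> \<gamma> d fine p \<longrightarrow>
        norm ((\<Sum>(x, k)\<in>p. Henstock_Kurzweil_Integration.content k *\<^sub>R (if x \<in> {0..} then \<Phi> d x else 0)) - z d) < e/2)"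
    ..
  have "gauge (\<lambda>x. \<Inter>{\<gamma> d x | d. d \<in> D})" using \<gamma> assms(1) by (intro gauge_Inter) auto
  from fine_division_exists[OF this, of "-M" M] obtain p where
    p: "p tagged_division_of (cbox (-M) M)" "(\<lambda>x. \<Inter>{\<gamma> d x | d. d \<in> D}) fine p" by blast
  have "\<forall>d\<in>D. \<bar>(\<Sum>(x,K)\<in>p. Henstock_Kurzweil_Integration.content K * (if x \<in> {0..} then \<Phi> d x else 0)) - v d\<bar> < e"
  proof
    fix d assume d: "d \<in> D"
    have "\<gamma> d fine p" using p(2) d unfolding fine_Inter by auto
    have "norm ((\<Sum>(x, k)\<in>p. Henstock_Kurzweil_Integration.content k *\<^sub>R (if x \<in> {0..} then \<Phi> d x else 0)) - z d) < e/2"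
      using conjunct2[OF bspec[OF \<gamma> d], rule_format, OF conjI[OF p(1) \<open>\<gamma> d fine p\<close>]] .
    then show "\<bar>(\<Sum>(x,K)\<in>p. Henstock_Kurzweil_Integration.content K * (if x \<in> {0..} then \<Phi> d x else 0)) - v d\<bar> < e"
    proof -
      have "\<bar>z d - v d\<bar> < e/2" using z d by auto
      with \<open>norm ((\<Sum>(x, k)\<in>p. Henstock_Kurzweil_Integration.content k *\<^sub>R (if x \<in> {0..} then \<Phi> d x else 0)) - z d) < e/2\<close>
      show ?thesis by (rule abs_tri_half2)
    qed
  qed
  moreover have "p tagged_division_of {-M..M}" using p(1) by simp
  ultimately show ?thesis by (intro exI[of _ p] exI[of _ "-M"] exI[of _ M] conjI)
qed

lemma pad_sum:
  fixes F :: "'j \<Rightarrow> real"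
  assumes "card J' \<le> K" "bij_betw f {0..<card J'} J'"
  shows "(\<Sum>k<K. (if k < card J' then F (f k) else 0)) = (\<Sum>j\<in>J'. F j)"
proof -
  have "(\<Sum>k<K. (if k < card J' then F (f k) else 0)) = (\<Sum>k\<in>{0..<card J'}. F (f k))"
  proof -
    have "(\<Sum>k<K. (if k < card J' then F (f k) else 0)) = (\<Sum>k\<in>{0..<card J'}. (if k < card J' then F (f k) else 0))"
      using assms(1) by (intro sum.mono_neutral_right) auto
    then show ?thesis by simp
  qed
  also have "\<dots> = (\<Sum>j\<in>J'. F j)" using sum.reindex_bij_betw[OF assms(2)] .
  finally show ?thesis .
qed

lemma approx_finite:
  fixes \<Psi> :: "'d \<Rightarrow> real \<Rightarrow> real" and h :: "real \<Rightarrow> real"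
  assumes fin: "finite D" and hpos: "\<forall>x\<ge>0. h x \<ge> 0" and hint: "(h has_integral H) {0..}"
    and int: "\<forall>d\<in>D. ((\<lambda>x. h x * \<Psi> d (x/(1+x))) has_integral v d) {0..}" and e: "e > 0" "e \<le> 1"
  shows "\<exists>w y. (\<forall>k. 0 \<le> w k \<and> 0 \<le> y k \<and> y k \<le> 1) \<and> (\<Sum>k<card D. w k) \<le> H + 1 \<and>
     (\<forall>d\<in>D. \<bar>(\<Sum>k<card D. w k * \<Psi> d (y k)) - v d\<bar> < e)"
proof -
  define \<Phi> where "\<Phi> q = (case q of None \<Rightarrow> h | Some d \<Rightarrow> (\<lambda>x. h x * \<Psi> d (x/(1+x))))" for q
  define V where "V q = (case q of None \<Rightarrow> H | Some d \<Rightarrow> v d)" for q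
  define D' where "D' = insert None (Some ` D)"
  have finD': "finite D'" using fin by (simp add: D'_def)
  have "\<forall>q\<in>D'. (\<Phi> q has_integral V q) {0..}"
    using hint int by (auto simp: D'_def \<Phi>_def V_def)
  from approx_riemann[OF finD' this e(1)] obtain p a b where
    p: "p tagged_division_of {a..b}" and
    RS: "\<forall>q\<in>D'. \<bar>(\<Sum>(x,K)\<in>p. Henstock_Kurzweil_Integration.content K * (if x \<in> {0..} then \<Phi> q x else 0)) - V q\<bar> < e"
    by blast
  have finp: "finite p" using p by (rule tagged_division_of_finite)
  define J where "J = {j\<in>p. fst j \<ge> 0}"
  define w0 where "w0 j = Henstock_Kurzweil_Integration.content (snd j) * h (fst j)" for j :: "real \<times> real set"
  define g where "g j d = \<Psi> d (fst j / (1 + fst j))" for j :: "real \<times> real set" and d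
  have finJ: "finite J" using finp by (simp add: J_def)
  have w0pos: "\<forall>j\<in>J. w0 j \<ge> 0" using hpos by (auto simp: J_def w0_def)
  have RSeq: "(\<Sum>(x,K)\<in>p. Henstock_Kurzweil_Integration.content K * (if x \<in> {0..} then \<Phi> q x else 0))
      = (\<Sum>j\<in>J. w0 j * (case q of None \<Rightarrow> 1 | Some d \<Rightarrow> g j d))" for q
  proof -
    have "(\<Sum>j\<in>J. w0 j * (case q of None \<Rightarrow> 1 | Some d \<Rightarrow> g j d)) =
        (\<Sum>j\<in>p. if fst j \<ge> 0 then w0 j * (case q of None \<Rightarrow> 1 | Some d \<Rightarrow> g j d) else 0)"
      unfolding J_def using finp by (rule sum.inter_filter)
    also have "\<dots> = (\<Sum>(x,K)\<in>p. Henstock_Kurzweil_Integration.content K * (if x \<in> {0..} then \<Phi> q x else 0))"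
      by (intro sum.cong refl) (auto simp: w0_def g_def \<Phi>_def split: option.splits)
    finally show ?thesis by simp
  qed
  from carath[OF fin finJ w0pos, of g] obtain J' w' where
    J': "J' \<subseteq> J" "card J' \<le> card D" "\<forall>j\<in>J'. w' j \<ge> 0"
      "\<forall>d\<in>D. (\<Sum>j\<in>J'. w' j * g j d) = (\<Sum>j\<in>J. w0 j * g j d)" "(\<Sum>j\<in>J'. w' j) \<le> (\<Sum>j\<in>J. w0 j)"
    by blast
  have finJ': "finite J'" using J'(1) finJ by (rule finite_subset)
  obtain f where f: "bij_betw f {0..<card J'} J'" using ex_bij_betw_nat_finite[OF finJ'] by blast
  define W where "W k = (if k < card J' then w' (f k) else 0)" for k
  define Y where "Y k = (if k < card J' then fst (f k) / (1 + fst (f k)) else 0)" for k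
  have fk: "f k \<in> J'" if "k < card J'" for k using f that by (auto simp: bij_betw_def)
  have "\<forall>k. 0 \<le> W k \<and> 0 \<le> Y k \<and> Y k \<le> 1"
  proof
    fix k
    show "0 \<le> W k \<and> 0 \<le> Y k \<and> Y k \<le> 1"
    proof (cases "k < card J'")
      case True
      then have "f k \<in> J" using fk J'(1) by auto
      then have "fst (f k) \<ge> 0" by (auto simp: J_def)
      then show ?thesis using True fk J'(3) by (auto simp: W_def Y_def)
    qed (auto simp: W_def Y_def)
  qed
  moreover have "(\<Sum>k<card D. W k) \<le> H + 1"
  proof -
    have "(\<Sum>k<card D. W k) = (\<Sum>j\<in>J'. w' j)"
      unfolding W_def by (rule pad_sum[OF J'(2) f])
    also have "\<dots> \<le> (\<Sum>j\<in>J. w0 j)" by (rule J'(5))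
    also have "\<dots> < H + e" using RS[rule_format, of None] RSeq[of None] by (simp add: D'_def V_def)
    finally show ?thesis using e by simp
  qed
  moreover have "\<forall>d\<in>D. \<bar>(\<Sum>k<card D. W k * \<Psi> d (Y k)) - v d\<bar> < e"
  proof
    fix d assume d: "d \<in> D"
    have "(\<Sum>k<card D. W k * \<Psi> d (Y k)) = (\<Sum>k<card D. (if k < card J' then w' (f k) * g (f k) d else 0))"
      by (intro sum.cong refl) (simp add: W_def Y_def g_def)
    also have "\<dots> = (\<Sum>j\<in>J'. w' j * g j d)" by (rule pad_sum[OF J'(2) f])
    also have "\<dots> = (\<Sum>j\<in>J. w0 j * g j d)" using J'(4) d by blast
    finally show "\<bar>(\<Sum>k<card D. W k * \<Psi> d (Y k)) - v d\<bar> < e"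
      using RS[rule_format, of "Some d"] RSeq[of "Some d"] d by (simp add: D'_def V_def)
  qed
  ultimately show ?thesis by blast
qed

lemma limit_rep:
  fixes \<Psi> :: "'d \<Rightarrow> real \<Rightarrow> real" and h :: "real \<Rightarrow> real"
  assumes fin: "finite D" and hpos: "\<forall>x\<ge>0. h x \<ge> 0" and hint: "(h has_integral H) {0..}"
    and int: "\<forall>d\<in>D. ((\<lambda>x. h x * \<Psi> d (x/(1+x))) has_integral v d) {0..}"
    and cont: "\<forall>d\<in>D. continuous_on {0..1} (\<Psi> d)"
  shows "\<exists>w y. (\<forall>k. 0 \<le> w k \<and> 0 \<le> y k \<and> y k \<le> 1) \<and>
     (\<forall>d\<in>D. (\<Sum>k<card D. w k * \<Psi> d (y k)) = v d)"
proof -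
  define K where "K = card D"
  define P where "P N w y \<longleftrightarrow> (\<forall>k. 0 \<le> w k \<and> 0 \<le> y k \<and> y k \<le> 1) \<and> (\<Sum>k<K. w k) \<le> H + 1 \<and>
     (\<forall>d\<in>D. \<bar>(\<Sum>k<K. w k * \<Psi> d (y k)) - v d\<bar> < inverse (real (Suc N)))" for N w y
  have "\<forall>N. \<exists>w y. P N w y"
  proof
    fix N
    have "inverse (real (Suc N)) > 0" "inverse (real (Suc N)) \<le> 1" by (auto simp: field_simps)
    from approx_finite[OF fin hpos hint int this] show "\<exists>w y. P N w y" unfolding P_def K_def .
  qed
  then have "\<forall>N. \<exists>wy. P N (fst wy) (snd wy)" by simp
  from choice[OF this] obtain F where F: "\<forall>N. P N (fst (F N)) (snd (F N))" ..
  define W where "W N = fst (F N)" for N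
  define Y where "Y N = snd (F N)" for N
  have WY: "\<forall>N. P N (W N) (Y N)" using F by (simp add: W_def Y_def)
  define X where "X N k = (if k < K then W N k else Y N (k - K))" for N k
  have "\<forall>N. \<forall>k<2*K. \<bar>X N k\<bar> \<le> \<bar>H\<bar> + 2"
  proof (intro allI impI)
    fix N k assume k: "k < 2*K"
    have P: "P N (W N) (Y N)" using WY by blast
    show "\<bar>X N k\<bar> \<le> \<bar>H\<bar> + 2"
    proof (cases "k < K")
      case True
      have "W N k \<le> (\<Sum>k<K. W N k)" using P True unfolding P_def by (intro member_le_sum) auto
      also have "\<dots> \<le> H + 1" using P unfolding P_def by blast
      finally show ?thesis using True P unfolding X_def P_def by auto
    next
      case False
      have "0 \<le> Y N (k - K)" "Y N (k - K) \<le> 1" using P unfolding P_def by auto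
      then show ?thesis using False unfolding X_def by auto
    qed
  qed
  from subseq_conv[OF this] obtain r L where rL: "strict_mono r" "\<forall>k<2*K. (\<lambda>N. X (r N) k) \<longlonglongrightarrow> L k"
    by blast
  define wL where "wL k = (if k < K then L k else 0)" for k
  define yL where "yL k = (if k < K then L (k + K) else 0)" for k
  have limW: "(\<lambda>N. W (r N) k) \<longlonglongrightarrow> wL k" if "k < K" for k
    using rL(2)[rule_format, of k] that by (simp add: X_def wL_def)
  have limY: "(\<lambda>N. Y (r N) k) \<longlonglongrightarrow> yL k" if "k < K" for k
    using rL(2)[rule_format, of "k + K"] that by (simp add: X_def yL_def)
  have bnds0: "\<forall>k. 0 \<le> W N k \<and> 0 \<le> Y N k \<and> Y N k \<le> 1" for N
  proof -
    have "P N (W N) (Y N)" using WY by blast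
    then show ?thesis unfolding P_def by (rule conjunct1)
  qed
  have bnds: "0 \<le> W N k" "0 \<le> Y N k" "Y N k \<le> 1" for N k using bnds0[of N] by blast+
  have wL0: "0 \<le> wL k" for k
  proof (cases "k < K")
    case True
    show ?thesis by (rule LIMSEQ_le_const[OF limW[OF True]]) (use bnds in auto)
  qed (simp add: wL_def)
  have yL01: "0 \<le> yL k \<and> yL k \<le> 1" for k
  proof (cases "k < K")
    case True
    have "0 \<le> yL k" by (rule LIMSEQ_le_const[OF limY[OF True]]) (use bnds in auto)
    moreover have "yL k \<le> 1" by (rule LIMSEQ_le_const2[OF limY[OF True]]) (use bnds in auto)
    ultimately show ?thesis by simp
  qed (simp add: yL_def)
  have "\<forall>d\<in>D. (\<Sum>k<K. wL k * \<Psi> d (yL k)) = v d"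
  proof
    fix d assume d: "d \<in> D"
    define S where "S N = (\<Sum>k<K. W (r N) k * \<Psi> d (Y (r N) k))" for N
    have lim1: "S \<longlonglongrightarrow> (\<Sum>k<K. wL k * \<Psi> d (yL k))"
      unfolding S_def
    proof (intro tendsto_sum tendsto_mult)
      fix k assume k: "k \<in> {..<K}"
      show "(\<lambda>N. W (r N) k) \<longlonglongrightarrow> wL k" using limW k by simp
      show "(\<lambda>N. \<Psi> d (Y (r N) k)) \<longlonglongrightarrow> \<Psi> d (yL k)"
        by (rule continuous_on_tendsto_compose[OF cont[rule_format, OF d] limY]) (use k yL01 bnds in auto)
    qed
    have lim2: "S \<longlonglongrightarrow> v d"
    proof -
      have limi: "(\<lambda>N. inverse (real (Suc (r N)))) \<longlonglongrightarrow> 0"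
        using LIMSEQ_subseq_LIMSEQ[OF LIMSEQ_inverse_real_of_nat rL(1)] by (simp add: o_def)
      have bd: "\<forall>N. norm (S N - v d) \<le> inverse (real (Suc (r N)))"
      proof
        fix N
        have "P (r N) (W (r N)) (Y (r N))" using WY by blast
        then have "\<forall>d\<in>D. \<bar>(\<Sum>k<K. W (r N) k * \<Psi> d (Y (r N) k)) - v d\<bar> < inverse (real (Suc (r N)))"
          unfolding P_def by (elim conjE)
        then have "\<bar>S N - v d\<bar> < inverse (real (Suc (r N)))" using d unfolding S_def by blast
        then show "norm (S N - v d) \<le> inverse (real (Suc (r N)))" by simp
      qed
      have "(\<lambda>N. S N - v d) \<longlonglongrightarrow> 0"
        using Lim_null_comparison[OF always_eventually[OF bd] limi] .
      then show ?thesis by (subst Lim_null) 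
    qed
    show "(\<Sum>k<K. wL k * \<Psi> d (yL k)) = v d" using LIMSEQ_unique[OF lim1 lim2] .
  qed
  then show ?thesis using wL0 yL01 unfolding K_def by (intro exI[of _ wL] exI[of _ yL] conjI allI) auto
qed

definition fh :: "(nat \<Rightarrow> real) \<Rightarrow> nat \<Rightarrow> real \<Rightarrow> nat \<Rightarrow> real \<Rightarrow> real" where
  "fh c m B i y = (if c i = 0 then 1 else y powr c i) * (1 - y) powr (B / real m - c i) *
      ((1 - y) powr B + y powr B) powr (- 1 / real m) / Gamma (c i + 1)"

definition PsiH :: "(nat \<Rightarrow> real) \<Rightarrow> nat \<Rightarrow> real \<Rightarrow> nat list \<Rightarrow> real \<Rightarrow> real" where
  "PsiH c m B d y = prod_list (map (\<lambda>i. fh c m B i y) d)"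

definition hh :: "real \<Rightarrow> real \<Rightarrow> real" where
  "hh B t = (1 + t powr B) / exp t"

lemma fh_alt:
  assumes x: "x > 0"
  shows "fh c m B i (x / (1 + x)) = x powr c i * (1 + x powr B) powr (- 1 / real m) / Gamma (c i + 1)"
proof -
  define a where "a = 1 + x"
  have a: "a > 0" using x by (simp add: a_def)
  have y1: "1 - x / (1 + x) = 1 / a" using x by (simp add: a_def field_simps)
  have ypos: "x / (1 + x) > 0" using x by simp
  have i1: "(if c i = 0 then 1 else (x / (1 + x)) powr c i) = x powr c i / a powr c i"
    using ypos x by (auto simp: powr_divide a_def)
  have i2: "(1 / a) powr (B / real m - c i) = a powr (c i - B / real m)"
    using a by (simp add: powr_divide powr_minus_divide[symmetric])
  have i3: "(1 / a) powr B + (x / a) powr B = (1 + x powr B) / a powr B"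
    using a by (simp add: powr_divide add_divide_distrib)
  have i4: "((1 + x powr B) / a powr B) powr (- 1 / real m) = (1 + x powr B) powr (- 1 / real m) * a powr (B / real m)"
  proof -
    have "((1 + x powr B) / a powr B) powr (- 1 / real m) = (1 + x powr B) powr (- 1 / real m) / (a powr B) powr (- 1 / real m)"
      by (rule powr_divide)
    also have "(a powr B) powr (- 1 / real m) = a powr (- (B / real m))" by (simp add: powr_powr)
    also have "\<dots> = inverse (a powr (B / real m))" by (rule powr_minus)
    finally show ?thesis by (simp add: divide_inverse)
  qed
  have "fh c m B i (x / (1 + x)) = x powr c i / a powr c i * a powr (c i - B / real m) *
      ((1 + x powr B) powr (- 1 / real m) * a powr (B / real m)) / Gamma (c i + 1)"
    unfolding fh_def i1 y1 i2 using i3 i4 by (simp add: a_def)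
  also have "\<dots> = x powr c i * (1 + x powr B) powr (- 1 / real m) *
      (a powr (c i - B / real m) * a powr (B / real m) / a powr c i) / Gamma (c i + 1)"
    by (simp add: field_simps)
  also have "a powr (c i - B / real m) * a powr (B / real m) / a powr c i = 1"
    using a by (simp add: powr_add[symmetric])
  finally show ?thesis by simp
qed

lemma PsiH_alt:
  assumes x: "x > 0"
  shows "PsiH c m B d (x / (1 + x)) = x powr (sum_list (map c d)) *
      ((1 + x powr B) powr (- 1 / real m)) ^ length d / prod_list (map (\<lambda>i. Gamma (c i + 1)) d)"
proof -
  have "PsiH c m B d (x / (1 + x)) = prod_list (map (\<lambda>i. x powr c i * (1 + x powr B) powr (- 1 / real m) / Gamma (c i + 1)) d)"
    unfolding PsiH_def using x by (simp add: fh_alt)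
  also have "\<dots> = x powr (sum_list (map c d)) *
      ((1 + x powr B) powr (- 1 / real m)) ^ length d / prod_list (map (\<lambda>i. Gamma (c i + 1)) d)"
  proof (induction d)
    case Nil
    then show ?case using x by simp
  next
    case (Cons a d)
    show ?case by (simp only: list.map prod_list.Cons sum_list.Cons Cons.IH powr_add length_Cons power_Suc times_divide_times_eq mult_ac)
  qed
  finally show ?thesis .
qed

lemma key_identity:
  assumes x: "x > 0" and m: "m > 0" and len: "length d = m"
  shows "hh B x * PsiH c m B d (x / (1 + x)) = x powr (sum_list (map c d)) / exp x / prod_list (map (\<lambda>i. Gamma (c i + 1)) d)"
proof -
  define z where "z = 1 + x powr B"
  have z: "z > 0" by (simp add: z_def add_pos_nonneg)
  have "(z powr (- 1 / real m)) ^ m = z powr (- 1 / real m * real m)"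
    using z by (simp add: powr_realpow[symmetric] powr_powr)
  also have "\<dots> = 1 / z" using m z by (simp add: powr_neg_one)
  finally have zz: "(z powr (- 1 / real m)) ^ m = 1 / z" .
  show ?thesis unfolding PsiH_alt[OF x] hh_def len using zz z
    by (simp add: z_def[symmetric] field_simps)
qed

lemma hh_integral:
  assumes B: "B > 0"
  shows "(hh B has_integral (Gamma 1 + Gamma (B + 1))) {0..}"
proof -
  have i1: "((\<lambda>t::real. t powr (1 - 1) / exp t) has_integral Gamma (1::real)) {0..}"
    using Gamma_integral_real[of 1] by simp
  have i2: "((\<lambda>t. t powr (B + 1 - 1) / exp t) has_integral Gamma (B + 1)) {0..}"
    by (rule Gamma_integral_real) (use B in simp)
  have i3: "((\<lambda>t. t powr (1 - 1) / exp t + t powr (B + 1 - 1) / exp t) has_integral (Gamma 1 + Gamma (B + 1))) {0..}"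
    by (rule has_integral_add[OF i1 i2])
  show ?thesis
    by (rule has_integral_spike[OF negligible_sing[of 0] _ i3]) (auto simp: hh_def add_divide_distrib)
qed

lemma Psi_integral:
  assumes m: "m > 0" and len: "length d = m" and c: "\<forall>i\<in>set d. c i \<ge> 0"
  shows "((\<lambda>x. hh B x * PsiH c m B d (x / (1 + x))) has_integral gen_pascal_tensor c d) {0..}"
proof -
  define S where "S = sum_list (map c d)"
  have S: "S \<ge> 0" unfolding S_def using c by (induction d) auto
  have i1: "((\<lambda>t. t powr (S + 1 - 1) / exp t) has_integral Gamma (S + 1)) {0..}"
    by (rule Gamma_integral_real) (use S in simp)
  have i2: "((\<lambda>t. t powr (S + 1 - 1) / exp t / prod_list (map (\<lambda>i. Gamma (c i + 1)) d)) has_integral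
      Gamma (S + 1) / prod_list (map (\<lambda>i. Gamma (c i + 1)) d)) {0..}"
    by (rule has_integral_divide[OF i1])
  show ?thesis unfolding gen_pascal_tensor_def S_def[symmetric]
    by (rule has_integral_spike[OF negligible_sing[of 0] _ i2]) (use m len in \<open>auto simp: key_identity S_def\<close>)
qed

lemma fh_nonneg:
  assumes "c i \<ge> 0"
  shows "fh c m B i y \<ge> 0"
  unfolding fh_def using assms by (auto intro!: mult_nonneg_nonneg divide_nonneg_pos)

lemma fh_cont:
  assumes c: "c i \<ge> 0" and cB: "c i < B / real m" and B: "B > 0" and m: "m > 0"
  shows "continuous_on {0..1} (fh c m B i)"
proof -
  have base_pos: "(1 - y) powr B + y powr B > 0" if "y \<in> {0..1}" for y :: real
  proof (cases "y \<le> 1/2")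
    case True
    then have "(1 - y) powr B > 0" by simp
    moreover have "y powr B \<ge> 0" by simp
    ultimately show ?thesis by linarith
  next
    case False
    then have "y powr B > 0" by simp
    moreover have "(1 - y) powr B \<ge> 0" by simp
    ultimately show ?thesis by linarith
  qed
  have c1: "continuous_on {0..1} (\<lambda>y::real. if c i = 0 then 1 else y powr c i)"
  proof (cases "c i = 0")
    case True
    then show ?thesis by simp
  next
    case False
    then have "c i > 0" using c by simp
    then have "continuous_on {0..1} (\<lambda>y::real. y powr c i)"
      by (intro continuous_on_powr') (auto intro: continuous_intros)
    then show ?thesis using False by simp
  qed
  have c2: "continuous_on {0..1} (\<lambda>y::real. (1 - y) powr (B / real m - c i))"
    using cB by (intro continuous_on_powr') (auto intro: continuous_intros)
  have c3a: "continuous_on {0..1} (\<lambda>y::real. (1 - y) powr B)"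
    using B by (intro continuous_on_powr') (auto intro: continuous_intros)
  have c3b: "continuous_on {0..1} (\<lambda>y::real. y powr B)"
    using B by (intro continuous_on_powr') (auto intro: continuous_intros)
  have c3: "continuous_on {0..1} (\<lambda>y::real. ((1 - y) powr B + y powr B) powr (- 1 / real m))"
  proof (rule continuous_on_powr')
    show "continuous_on {0..1} (\<lambda>y::real. (1 - y) powr B + y powr B)" by (rule continuous_on_add[OF c3a c3b])
    show "continuous_on {0..1} (\<lambda>y::real. - 1 / real m)" by simp
  next
    show "\<forall>y\<in>{0..1}. 0 \<le> (1 - y) powr B + y powr B \<and> ((1 - y) powr B + y powr B = 0 \<longrightarrow> - 1 / real m > 0)"
    proof (intro ballI conjI impI)
    fix y :: real assume y: "y \<in> {0..1}"
    show "0 \<le> (1 - y) powr B + y powr B" using base_pos[OF y] by simp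
    assume "(1 - y) powr B + y powr B = 0"
    then show "- 1 / real m > 0" using base_pos[OF y] by simp
  qed
  qed
  have g: "Gamma (c i + 1) > 0" using c by (intro Gamma_real_pos) simp
  show ?thesis unfolding fh_def
    by (intro continuous_on_divide continuous_on_mult c1 c2 c3 continuous_on_const)
       (use g in auto)
qed

lemma PsiH_cont:
  assumes "\<forall>i\<in>set d. continuous_on {0..1} (fh c m B i)"
  shows "continuous_on {0..1} (PsiH c m B d)"
  using assms unfolding PsiH_def
proof (induction d)
  case Nil
  then show ?case by simp
next
  case (Cons a d)
  then show ?case by (simp add: continuous_on_mult)
qed

lemma TI_0: "tensor_indices n 0 = {[]}"
  by (auto simp: tensor_indices_def)

lemma TI_Suc: "tensor_indices n (Suc m) = (\<lambda>(i, xs). i # xs) ` ({..<n} \<times> tensor_indices n m)"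
proof (intro set_eqI iffI)
  fix xs assume "xs \<in> tensor_indices n (Suc m)"
  then obtain i zs where "xs = i # zs" "i < n" "zs \<in> tensor_indices n m"
    by (cases xs) (auto simp: tensor_indices_def)
  then show "xs \<in> (\<lambda>(i, xs). i # xs) ` ({..<n} \<times> tensor_indices n m)" by force
qed (auto simp: tensor_indices_def)

lemma TI_finite: "finite (tensor_indices n m)"
proof -
  have "tensor_indices n m = {xs. set xs \<subseteq> {..<n} \<and> length xs = m}" by (auto simp: tensor_indices_def)
  then show ?thesis using finite_lists_length_eq[of "{..<n}" m] by simp
qed

lemma TI_sum_Suc:
  "(\<Sum>xs\<in>tensor_indices n (Suc m). F xs) = (\<Sum>i<n. \<Sum>xs\<in>tensor_indices n m. F (i # xs))"
proof -
  have inj: "inj_on (\<lambda>(i, xs). i # xs) ({..<n} \<times> tensor_indices n m)" by (auto simp: inj_on_def)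
  have "(\<Sum>xs\<in>tensor_indices n (Suc m). F xs) = (\<Sum>p\<in>{..<n} \<times> tensor_indices n m. F ((\<lambda>(i, xs). i # xs) p))"
    unfolding TI_Suc sum.reindex[OF inj] by (simp add: o_def)
  also have "\<dots> = (\<Sum>i<n. \<Sum>xs\<in>tensor_indices n m. F (i # xs))"
    unfolding sum.cartesian_product by (rule sum.cong) auto
  finally show ?thesis .
qed

lemma TI_sum_prod: "(\<Sum>xs\<in>tensor_indices n m. prod_list (map g xs)) = (\<Sum>i<n. g i) ^ m"
  for g :: "nat \<Rightarrow> real"
proof (induction m)
  case 0
  then show ?case by (simp add: TI_0)
next
  case (Suc m)
  have "(\<Sum>xs\<in>tensor_indices n (Suc m). prod_list (map g xs)) = (\<Sum>i<n. g i * (\<Sum>xs\<in>tensor_indices n m. prod_list (map g xs)))"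
    unfolding TI_sum_Suc by (intro sum.cong refl) (simp add: sum_distrib_left)
  also have "\<dots> = (\<Sum>i<n. g i) * (\<Sum>i<n. g i) ^ m" by (simp add: Suc sum_distrib_right)
  finally show ?case by simp
qed

lemma TI_sum_2: "(\<Sum>xs\<in>tensor_indices n 2. F xs) = (\<Sum>i<n. \<Sum>j<n. F [i, j])"
  unfolding numeral_2_eq_2 TI_sum_Suc TI_0 by simp

lemma prod_list_map_mult: "prod_list (map f xs) * prod_list (map g xs) = prod_list (map (\<lambda>i. f i * g i) xs)"
  for f g :: "nat \<Rightarrow> real"
  by (induction xs) (auto simp: mult_ac)

lemma prod_list_map_scale: "prod_list (map (\<lambda>i. a * f i) xs) = a ^ length xs * prod_list (map f xs)"
  for f g :: "nat \<Rightarrow> real"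
  by (induction xs) (simp_all add: algebra_simps)

lemma sum_list_mset_eq:
  fixes f :: "nat \<Rightarrow> real"
  assumes "mset xs = mset ys"
  shows "sum_list (map f xs) = sum_list (map f ys)"
proof -
  have "sum_list (map f xs) = sum_mset (mset (map f xs))" by (rule sum_mset_sum_list[symmetric])
  also have "\<dots> = sum_mset (image_mset f (mset ys))" using assms by simp
  also have "\<dots> = sum_mset (mset (map f ys))" by simp
  also have "\<dots> = sum_list (map f ys)" by (rule sum_mset_sum_list)
  finally show ?thesis .
qed

lemma prod_list_mset_eq:
  fixes f :: "nat \<Rightarrow> real"
  assumes "mset xs = mset ys"
  shows "prod_list (map f xs) = prod_list (map f ys)"
proof -
  have "prod_list (map f xs) = prod_mset (mset (map f xs))" by (rule prod_mset_prod_list[symmetric])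
  also have "\<dots> = prod_mset (image_mset f (mset ys))" using assms by simp
  also have "\<dots> = prod_mset (mset (map f ys))" by simp
  also have "\<dots> = prod_list (map f ys)" by (rule prod_mset_prod_list)
  finally show ?thesis .
qed

lemma pascal_symmetric: "symmetric_tensor n m (gen_pascal_tensor c)"
  unfolding symmetric_tensor_def gen_pascal_tensor_def
proof (intro ballI impI)
  fix xs ys :: "nat list" assume h: "mset xs = mset ys"
  show "Gamma (sum_list (map c xs) + 1) / prod_list (map (\<lambda>i. Gamma (c i + 1)) xs) =
        Gamma (sum_list (map c ys) + 1) / prod_list (map (\<lambda>i. Gamma (c i + 1)) ys)"
    by (simp only: sum_list_mset_eq[OF h, of c] prod_list_mset_eq[OF h, of "\<lambda>i. Gamma (c i + 1)"])
qed

lemma pascal_decomp: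
  assumes m: "m > 0" and c: "\<forall>i<n. c i \<ge> 0"
  shows "\<exists>(r::nat) u. (\<forall>k<r. \<forall>i<n. u k i \<ge> 0) \<and>
     (\<forall>xs\<in>tensor_indices n m. gen_pascal_tensor c xs = (\<Sum>k<r. tensor_power (u k) xs))"
proof -
  define D where "D = tensor_indices n m"
  define B where "B = real m * (\<Sum>i<n. c i) + 1"
  have sc: "(\<Sum>i<n. c i) \<ge> 0" using c by (intro sum_nonneg) auto
  have B: "B > 0" unfolding B_def using sc by (simp add: add_nonneg_pos)
  have cB: "c i < B / real m" if "i < n" for i
  proof -
    have "c i \<le> (\<Sum>i<n. c i)" using c that by (intro member_le_sum) auto
    then have "real m * c i < B" unfolding B_def using m by (simp add: mult_left_mono add_nonneg_pos le_less_trans[of _ "real m * sum c {..<n}"])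
    then show ?thesis using m by (simp add: field_simps)
  qed
  have setD: "set d \<subseteq> {..<n}" "length d = m" if "d \<in> D" for d using that by (auto simp: D_def tensor_indices_def)
  have hpos: "\<forall>x\<ge>0. hh B x \<ge> 0" by (auto simp: hh_def intro!: divide_nonneg_pos add_nonneg_nonneg)
  have int: "\<forall>d\<in>D. ((\<lambda>x. hh B x * PsiH c m B d (x / (1 + x))) has_integral gen_pascal_tensor c d) {0..}"
  proof
    fix d assume d: "d \<in> D"
    show "((\<lambda>x. hh B x * PsiH c m B d (x / (1 + x))) has_integral gen_pascal_tensor c d) {0..}"
      by (rule Psi_integral) (use m setD[OF d] c in auto)
  qed
  have cont: "\<forall>d\<in>D. continuous_on {0..1} (PsiH c m B d)"
  proof
    fix d assume d: "d \<in> D"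
    show "continuous_on {0..1} (PsiH c m B d)"
      by (rule PsiH_cont) (use setD[OF d] c cB B m in \<open>auto intro!: fh_cont\<close>)
  qed
  have finD: "finite D" by (simp add: D_def TI_finite)
  from limit_rep[OF finD hpos hh_integral[OF B] int cont] obtain w y where
    wy: "\<forall>k. 0 \<le> w k \<and> 0 \<le> y k \<and> y k \<le> 1" "\<forall>d\<in>D. (\<Sum>k<card D. w k * PsiH c m B d (y k)) = gen_pascal_tensor c d"
    by blast
  define u where "u k i = w k powr (1 / real m) * fh c m B i (y k)" for k i
  have "\<forall>k<card D. \<forall>i<n. u k i \<ge> 0"
    using wy(1) c by (auto simp: u_def intro!: mult_nonneg_nonneg fh_nonneg)
  moreover have "\<forall>xs\<in>tensor_indices n m. gen_pascal_tensor c xs = (\<Sum>k<card D. tensor_power (u k) xs)"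
  proof
    fix xs assume xs: "xs \<in> tensor_indices n m"
    have len: "length xs = m" using xs by (simp add: tensor_indices_def)
    have "tensor_power (u k) xs = w k * PsiH c m B xs (y k)" for k
    proof -
      have "(w k powr (1 / real m)) ^ m = w k"
      proof (cases "w k = 0")
        case True
        then show ?thesis using m by simp
      next
        case False
        then have "w k > 0" using wy(1) by (simp add: less_le)
        then show ?thesis using m by (simp add: powr_realpow[symmetric] powr_powr)
      qed
      then show ?thesis unfolding tensor_power_def u_def PsiH_def prod_list_map_scale len by simp
    qed
    then show "gen_pascal_tensor c xs = (\<Sum>k<card D. tensor_power (u k) xs)"
      using wy(2) xs by (simp add: D_def)
  qed
  ultimately have "(\<forall>k<card D. \<forall>i<n. u k i \<ge> 0) \<and>
     (\<forall>xs\<in>tensor_indices n m. gen_pascal_tensor c xs = (\<Sum>k<card D. tensor_power (u k) xs))" (is ?H) by (rule conjI)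
  show ?thesis by (intro exI[where x = "card D"] exI[where x = u]) (rule \<open>?H\<close>)
qed

theorem theorem4p2:
  fixes n :: nat and c :: "nat \<Rightarrow> real"
  assumes "n \<ge> 2"
    and "\<forall>i<n. c i \<ge> 0"
    and "c 0 = 0"
    and "positive_definite_tensor n 2 (gen_pascal_tensor c)"
  shows "\<forall>m\<ge>2. strongly_completely_positive n m (gen_pascal_tensor c) \<and>
           (even m \<longrightarrow> positive_definite_tensor n m (gen_pascal_tensor c))"
proof (intro allI impI)
  fix m :: nat assume m2: "m \<ge> 2"
  define P where "P i j = gen_pascal_tensor c [i, j]" for i j
  have PD: "(\<Sum>i<n. \<Sum>j<n. P i j * (z i * z j)) > 0" if "\<exists>i<n. z i \<noteq> 0" for z
  proof -
    have "tensor_form n 2 (gen_pascal_tensor c) z > 0"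
      using assms(4) that unfolding positive_definite_tensor_def by blast
    then show ?thesis unfolding tensor_form_def TI_sum_2 P_def by simp
  qed
  have surj: "\<exists>z. \<forall>i<n. x i = (\<Sum>j<n. P i j * z j)" for x
  proof -
    define g where "g j i = (if j < n then P i j else x i)" for j i
    have "card {..<Suc n} > card {..<n}" by simp
    from lin_dep[OF finite_lessThan finite_lessThan this, of g] obtain \<alpha> where
      \<alpha>: "\<exists>j\<in>{..<Suc n}. \<alpha> j \<noteq> 0" "\<forall>i\<in>{..<n}. (\<Sum>j<Suc n. \<alpha> j * g j i) = 0" by blast
    have eq: "(\<Sum>j<n. \<alpha> j * P i j) + \<alpha> n * x i = 0" if "i < n" for i
      using \<alpha>(2) that by (simp add: g_def)
    show ?thesis
    proof (cases "\<alpha> n = 0")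
      case True
      then have nz: "\<exists>i<n. \<alpha> i \<noteq> 0" using \<alpha>(1) by (auto simp: less_Suc_eq)
      have "(\<Sum>i<n. \<Sum>j<n. P i j * (\<alpha> i * \<alpha> j)) = (\<Sum>i<n. \<alpha> i * (\<Sum>j<n. \<alpha> j * P i j))"
        by (simp add: sum_distrib_left algebra_simps)
      also have "\<dots> = 0" using eq True by simp
      finally show ?thesis using PD[OF nz] by simp
    next
      case False
      show ?thesis
      proof (intro exI[of _ "\<lambda>j. - \<alpha> j / \<alpha> n"] allI impI)
        fix i assume i: "i < n"
        have "(\<Sum>j<n. P i j * (- \<alpha> j / \<alpha> n)) = - (\<Sum>j<n. \<alpha> j * P i j) / \<alpha> n"
          by (simp add: sum_divide_distrib sum_negf algebra_simps)
        also have "\<dots> = x i" using eq[OF i] False by (simp add: field_simps)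
        finally show "x i = (\<Sum>j<n. P i j * (- \<alpha> j / \<alpha> n))" by simp
      qed
    qed
  qed
  have m0: "m > 0" using m2 by simp
  from pascal_decomp[OF m0 assms(2)] obtain r :: nat and u :: "nat \<Rightarrow> nat \<Rightarrow> real" where
    u: "\<forall>k<r. \<forall>i<n. u k i \<ge> 0"
       "\<forall>xs\<in>tensor_indices n m. gen_pascal_tensor c xs = (\<Sum>k<r. tensor_power (u k) xs)"
    by blast
  have Pdec: "P i j = (\<Sum>k<r. u k 0 ^ (m - 2) * u k i * u k j)" if "i < n" "j < n" for i j
  proof -
    define l where "l = replicate (m - 2) 0 @ [i, j]"
    have l: "l \<in> tensor_indices n m" using that m2 assms(1)
      by (auto simp: l_def tensor_indices_def)
    have "P i j = gen_pascal_tensor c l"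
      by (simp add: P_def gen_pascal_tensor_def l_def assms(3) sum_list_replicate)
    also have "\<dots> = (\<Sum>k<r. tensor_power (u k) l)" using u(2) l by blast
    also have "\<dots> = (\<Sum>k<r. u k 0 ^ (m - 2) * u k i * u k j)"
      by (simp add: tensor_power_def l_def mult.assoc)
    finally show ?thesis .
  qed
  have span: "\<exists>a. \<forall>i<n. x i = (\<Sum>k<r. a k * u k i)" for x
  proof -
    obtain z where z: "\<forall>i<n. x i = (\<Sum>j<n. P i j * z j)" using surj by blast
    define a where "a k = u k 0 ^ (m - 2) * (\<Sum>j<n. u k j * z j)" for k
    have "x i = (\<Sum>k<r. a k * u k i)" if i: "i < n" for i
    proof -
      have "x i = (\<Sum>j<n. (\<Sum>k<r. u k 0 ^ (m - 2) * u k i * u k j) * z j)"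
        using z i Pdec[OF i] by simp
      also have "\<dots> = (\<Sum>k<r. a k * u k i)"
        unfolding a_def by (simp add: sum_distrib_left sum_distrib_right sum.swap[of _ "{..<n}"] algebra_simps)
      finally show ?thesis .
    qed
    then show ?thesis by blast
  qed
  have scp: "strongly_completely_positive n m (gen_pascal_tensor c)"
    unfolding strongly_completely_positive_def
    using pascal_symmetric u(1) span u(2) by blast
  moreover have "positive_definite_tensor n m (gen_pascal_tensor c)" if ev: "even m"
    unfolding positive_definite_tensor_def
  proof (intro allI impI)
    fix x :: "nat \<Rightarrow> real" assume x: "\<exists>i<n. x i \<noteq> 0"
    define s where "s k = (\<Sum>i<n. u k i * x i)" for k
    have tf: "tensor_form n m (gen_pascal_tensor c) x = (\<Sum>k<r. s k ^ m)"
    proof -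
      have "tensor_form n m (gen_pascal_tensor c) x =
          (\<Sum>xs\<in>tensor_indices n m. \<Sum>k<r. prod_list (map (\<lambda>i. u k i * x i) xs))"
        unfolding tensor_form_def
        by (intro sum.cong refl) (simp add: u(2) tensor_power_def sum_distrib_right prod_list_map_mult)
      also have "\<dots> = (\<Sum>k<r. s k ^ m)"
        by (subst sum.swap) (simp add: TI_sum_prod s_def)
      finally show ?thesis .
    qed
    have nn: "\<forall>k\<in>{..<r}. s k ^ m \<ge> 0" using ev by (simp add: zero_le_even_power)
    show "tensor_form n m (gen_pascal_tensor c) x > 0"
    proof (rule ccontr)
      assume "\<not> ?thesis"
      then have "(\<Sum>k<r. s k ^ m) = 0" using tf nn sum_nonneg[of "{..<r}" "\<lambda>k. s k ^ m"] by simp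
      then have "\<forall>k\<in>{..<r}. s k ^ m = 0" using nn sum_nonneg_eq_0_iff[OF finite_lessThan, of r "\<lambda>k. s k ^ m"] by simp
      then have s0: "\<forall>k<r. s k = 0" using m2 by simp
      obtain a where a: "\<forall>i<n. x i = (\<Sum>k<r. a k * u k i)" using span by blast
      have "(\<Sum>i<n. x i * x i) = (\<Sum>i<n. x i * (\<Sum>k<r. a k * u k i))" using a by simp
      also have "\<dots> = (\<Sum>i<n. \<Sum>k<r. a k * (u k i * x i))"
        by (simp add: sum_distrib_left mult_ac)
      also have "\<dots> = (\<Sum>k<r. \<Sum>i<n. a k * (u k i * x i))"
        by (rule sum.swap)
      also have "\<dots> = (\<Sum>k<r. a k * s k)"
        unfolding s_def by (simp add: sum_distrib_left)
      also have "\<dots> = 0" using s0 by simp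
      finally have "(\<Sum>i<n. x i * x i) = 0" .
      then have "\<forall>i\<in>{..<n}. x i * x i = 0" using sum_nonneg_eq_0_iff[OF finite_lessThan, of n "\<lambda>i. x i * x i"] by simp
      then show False using x by auto
    qed
  qed
  ultimately show "strongly_completely_positive n m (gen_pascal_tensor c) \<and>
           (even m \<longrightarrow> positive_definite_tensor n m (gen_pascal_tensor c))" by (intro conjI impI) simp_all
qed

end
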